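(* Let $\mathbf t=(t_1,t_2,t_3)\in\mathbb N^3$, $k=t_1+t_2+t_3+2$, and let $w\ge k$ be a constant integer. For each $n>w$ let $\mathbf J=(J_1,J_2,J_3)$ be a random vector with \[ \mathbb P(\mathbf J=\mathbf j)=\binom{j_1}{t_1}\binom{j_2}{t_2}\binom{j_3}{t_3}\Big/\binom nk\qquad\text{for }\mathbf j\in\mathbb N^3,\ j_1+j_2+j_3=n-2 . \] Let $(E_n)_{n\ge0}$ and $(T_n)_{n\ge0}$ be sequences of real numbers such that $E_n$, for $n\le w$, are given constants and \[ E_n=T_n+\sum_{j=0}^{n-2}E_j\sum_{r=1}^3\mathbb P(J_r=j)\qquad\text{for }n>w, \] and suppose $T_n=an+O(n^{1-\varepsilon})$ for constants $a$ and $\varepsilon>0$. Then \[ E_n\sim\frac{a}{\mathcal H}\,n\ln n\qquad(n\to\infty), \] where $\mathcal H=\sum_{r=1}^3\frac{t_r+1}{k+1}(H_{k+1}-H_{t_r+1})$ and $H_m=\sum_{i=1}^m 1/i$.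
   Context: In the paper, $E_n$ is the expected cost $\mathbb E[C_n]$ of Generalized Yaroslavskiy Quicksort, $T_n$ the expected partitioning cost $\mathbb E[T_n]$, and the base values for $n\le w$ are expected Insertionsort costs; here these are stated abstractly as numbers. *)

theory Defs
  imports "HOL-Analysis.Analysis" "HOL-Library.Landau_Symbols"
begin

definition J_support :: "nat \<Rightarrow> (nat \<times> nat \<times> nat) set" where
  "J_support n = {(j1, j2, j3). j1 + j2 + j3 = n - 2}"

definition probJ :: "nat \<Rightarrow> nat \<Rightarrow> nat \<Rightarrow> nat \<Rightarrow> nat \<times> nat \<times> nat \<Rightarrow> real" where
  "probJ t1 t2 t3 n j = (case j of (j1, j2, j3) \<Rightarrow>
     if j1 + j2 + j3 = n - 2 then
       real (j1 choose t1) * real (j2 choose t2) * real (j3 choose t3)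
         / real (n choose (t1 + t2 + t3 + 2))
     else 0)"

definition comp3 :: "nat \<Rightarrow> nat \<times> nat \<times> nat \<Rightarrow> nat" where
  "comp3 r j = (case j of (j1, j2, j3) \<Rightarrow> if r = 1 then j1 else if r = 2 then j2 else j3)"

definition probJr :: "nat \<Rightarrow> nat \<Rightarrow> nat \<Rightarrow> nat \<Rightarrow> nat \<Rightarrow> nat \<Rightarrow> real" where
  "probJr t1 t2 t3 n r j = (\<Sum>x\<in>{x\<in>J_support n. comp3 r x = j}. probJ t1 t2 t3 n x)"

definition entropyH :: "nat \<Rightarrow> nat \<Rightarrow> nat \<Rightarrow> real" where
  "entropyH t1 t2 t3 = (let k = t1 + t2 + t3 + 2 in
     (\<Sum>t\<in>#{#t1, t2, t3#}. real (t + 1) / real (k + 1) * (harm (k + 1) - harm (t + 1))))"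

end

theory Submission
  imports Defs "HOL-Real_Asymp.Real_Asymp"
begin


lemma V: "(\<Sum>i\<le>N. (i choose a) * ((N-i) choose b)) = Suc N choose (a+b+1)"
proof (induction b arbitrary: N)
  case 0
  then show ?case by (simp add: sum_choose_upper)
next
  case (Suc b)
  note IHb = Suc.IH
  show ?case
  proof (induction N)
    case 0
    then show ?case by simp
  next
    case (Suc N)
    have "(\<Sum>i\<le>Suc N. (i choose a) * ((Suc N - i) choose Suc b))
        = (\<Sum>i\<le>N. (i choose a) * ((Suc N - i) choose Suc b))"
      by (simp add: atMost_Suc)
    also have "\<dots> = (\<Sum>i\<le>N. (i choose a) * ((N - i) choose b) + (i choose a) * ((N - i) choose Suc b))"
      by (intro sum.cong refl) (simp add: Suc_diff_le algebra_simps)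
    also have "\<dots> = (Suc N choose (a+b+1)) + (Suc N choose (a + Suc b + 1))"
      by (simp add: sum.distrib Suc.IH IHb)
    also have "\<dots> = Suc (Suc N) choose (a + Suc b + 1)" by simp
    finally show ?case .
  qed
qed

lemma alg0: "(z::real) = x + y \<Longrightarrow> z*(A+1) = x*(M+2) \<Longrightarrow> A \<ge> 0 \<Longrightarrow> M\<ge>0 \<Longrightarrow>
  z*((h + 1/(M+2)) - (ha + 1/(A+1)) + ha) = y*(h - (ha+1/(A+1)) + ha) + x*h"
proof -
  assume a: "z = x + y" "z*(A+1) = x*(M+2)" "A \<ge> 0" "M\<ge>0"
  have "z/(M+2) = x/(A+1)" using a by (simp add: field_simps)
  have "z*((h + 1/(M+2)) - (ha + 1/(A+1)) + ha) = z*(h - 1/(A+1)) + z/(M+2)" by (simp add: algebra_simps)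
  also have "\<dots> = (x+y)*(h - 1/(A+1)) + x/(A+1)" using \<open>z/(M+2) = x/(A+1)\<close> a(1) by (simp add: add_divide_distrib)
  also have "\<dots> = (x+y)*(h - 1/(A+1)) + x*(1/(A+1))" by simp
  also have "\<dots> = y*(h - (ha+1/(A+1)) + ha) + x*h" by (simp only: algebra_simps)
  finally show ?thesis .
qed

lemma HV0: "(\<Sum>i\<le>N. real (i choose a) * harm i) = real (Suc N choose (a+1)) * (harm (Suc N) - harm (a+1) + harm a)"
proof (induction N)
  case 0
  then show ?case by (cases a) (simp_all add: harm_Suc)
next
  case (Suc N)
  have e: "real (Suc (Suc N) choose Suc a) * (real a + 1) = real (Suc N choose a) * (real N + 2)"
  proof -
    have "real (Suc (Suc N) * (Suc N choose a)) = real ((Suc (Suc N) choose Suc a) * Suc a)"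
      by (simp only: Suc_times_binomial_eq)
    then show ?thesis by (simp add: algebra_simps)
  qed
  have p: "real (Suc (Suc N) choose Suc a) = real (Suc N choose a) + real (Suc N choose Suc a)" by simp
  have h1: "harm (Suc (Suc N)) = harm (Suc N) + 1 / (real N + 2)" by (simp add: harm_Suc field_simps)
  have h2: "harm (Suc a) = harm a + 1 / (real a + 1)" by (simp add: harm_Suc field_simps)
  have "(\<Sum>i\<le>Suc N. real (i choose a) * harm i) = real (Suc N choose Suc a) * (harm (Suc N) - (harm a + 1 / (real a + 1)) + harm a) + real (Suc N choose a) * harm (Suc N)"
    using Suc by (simp add: h2)
  also have "\<dots> = real (Suc (Suc N) choose Suc a) * ((harm (Suc N) + 1/(real N+2)) - (harm a + 1/(real a+1)) + harm a)"
    by (rule alg0[OF p e, symmetric]) auto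
  finally show ?case by (simp add: h1 h2)
qed

lemma alg1: "(z::real) = x + y \<Longrightarrow> z*(C+1) = x*(M+2) \<Longrightarrow> C \<ge> 0 \<Longrightarrow> M\<ge>0 \<Longrightarrow>
  z*((h + 1/(M+2)) - (hc + 1/(C+1)) + ha) = x*(h - hc + ha) + y*(h - (hc + 1/(C+1)) + ha)"
proof -
  assume a: "z = x + y" "z*(C+1) = x*(M+2)" "C \<ge> 0" "M\<ge>0"
  have q: "z/(M+2) = x/(C+1)" using a by (simp add: field_simps)
  have "z*((h + 1/(M+2)) - (hc + 1/(C+1)) + ha) = z*(h - hc + ha) + z/(M+2) - z*(1/(C+1))" by (simp add: algebra_simps)
  also have "\<dots> = (x+y)*(h - hc + ha) + x*(1/(C+1)) - (x+y)*(1/(C+1))" using q a(1) by simp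
  also have "\<dots> = x*(h - hc + ha) + y*(h - (hc + 1/(C+1)) + ha)" by (simp only: algebra_simps)
  finally show ?thesis .
qed

lemma HV: "(\<Sum>i\<le>N. real (i choose a) * real ((N-i) choose b) * harm i)
   = real (Suc N choose (a+b+1)) * (harm (Suc N) - harm (a+b+1) + harm a)"
proof (induction b arbitrary: N)
  case 0
  show ?case using HV0[where N=N and a=a] by (simp del: binomial_Suc_Suc)
next
  case (Suc b)
  note IHb = Suc.IH
  show ?case
  proof (induction N)
    case 0
    then show ?case by simp
  next
    case (Suc N)
    define c where "c = a + b + 1"
    have e: "real (Suc (Suc N) choose Suc c) * (real c + 1) = real (Suc N choose c) * (real N + 2)"
    proof -
      have "real (Suc (Suc N) * (Suc N choose c)) = real ((Suc (Suc N) choose Suc c) * Suc c)"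
        by (simp only: Suc_times_binomial_eq)
      then show ?thesis by (simp add: algebra_simps)
    qed
    have p: "real (Suc (Suc N) choose Suc c) = real (Suc N choose c) + real (Suc N choose Suc c)" by simp
    have h1: "harm (Suc (Suc N)) = harm (Suc N) + 1 / (real N + 2)" by (simp add: harm_Suc field_simps)
    have h2: "harm (Suc c) = harm c + 1 / (real c + 1)" by (simp add: harm_Suc field_simps)
    have "(\<Sum>i\<le>Suc N. real (i choose a) * real ((Suc N - i) choose Suc b) * harm i)
        = (\<Sum>i\<le>N. real (i choose a) * real ((Suc N - i) choose Suc b) * harm i)"
      by (simp add: atMost_Suc)
    also have "\<dots> = (\<Sum>i\<le>N. real (i choose a) * real ((N - i) choose b) * harm i
                     + real (i choose a) * real ((N - i) choose Suc b) * harm i)"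
      by (intro sum.cong refl) (simp add: Suc_diff_le algebra_simps)
    also have "\<dots> = real (Suc N choose c) * (harm (Suc N) - harm c + harm a)
        + real (Suc N choose Suc c) * (harm (Suc N) - (harm c + 1 / (real c + 1)) + harm a)"
    proof -
      have i1: "(\<Sum>i\<le>N. real (i choose a) * real ((N - i) choose b) * harm i) = real (Suc N choose c) * (harm (Suc N) - harm c + harm a)"
        using IHb[of N] by (simp add: c_def)
      have cc: "a + Suc b + 1 = Suc c" by (simp add: c_def)
      have i2: "(\<Sum>i\<le>N. real (i choose a) * real ((N - i) choose Suc b) * harm i) = real (Suc N choose Suc c) * (harm (Suc N) - (harm c + 1 / (real c + 1)) + harm a)"
        using Suc.IH unfolding cc h2 .
      show ?thesis by (simp only: sum.distrib i1 i2)
    qed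
    also have "\<dots> = real (Suc (Suc N) choose Suc c) * ((harm (Suc N) + 1/(real N+2)) - (harm c + 1/(real c+1)) + harm a)"
      by (rule alg1[OF p e, symmetric]) auto
    finally have X: "(\<Sum>i\<le>Suc N. real (i choose a) * real ((Suc N - i) choose Suc b) * harm i) = real (Suc (Suc N) choose Suc c) * ((harm (Suc N) + 1/(real N+2)) - (harm c + 1/(real c+1)) + harm a)" .
    have cc: "a + Suc b + 1 = Suc c" by (simp add: c_def)
    show ?case unfolding cc h1 h2 by (rule X)
  qed
qed



lemma marg1:
  assumes "j \<le> n - 2" "n \<ge> 2"
  shows "probJr t1 t2 t3 n 1 j = real (j choose t1) * real ((n-1-j) choose (t2+t3+1)) / real (n choose (t1+t2+t3+2))"
proof -
  define M where "M = n - 2 - j"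
  have S: "{x\<in>J_support n. comp3 1 x = j} = (\<lambda>b. (j, b, M - b)) ` {..M}"
    using assms by (auto simp: J_support_def comp3_def M_def image_iff split: prod.splits)
  have inj: "inj_on (\<lambda>b. (j, b, M - b)) {..M}" by (auto simp: inj_on_def)
  have "probJr t1 t2 t3 n 1 j = (\<Sum>b\<le>M. probJ t1 t2 t3 n (j, b, M - b))"
    unfolding probJr_def S by (simp add: sum.reindex[OF inj])
  also have "\<dots> = (\<Sum>b\<le>M. real (j choose t1) * (real (b choose t2) * real ((M - b) choose t3)) / real (n choose (t1+t2+t3+2)))"
    by (intro sum.cong refl) (use assms in \<open>auto simp: probJ_def M_def\<close>)
  also have "\<dots> = real (j choose t1) * real (\<Sum>b\<le>M. (b choose t2) * ((M - b) choose t3)) / real (n choose (t1+t2+t3+2))"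
    by (simp add: sum_divide_distrib[symmetric] sum_distrib_left[symmetric])
  also have "\<dots> = real (j choose t1) * real ((n-1-j) choose (t2+t3+1)) / real (n choose (t1+t2+t3+2))"
  proof -
    have "(\<Sum>b\<le>M. (b choose t2) * ((M - b) choose t3)) = Suc M choose (t2+t3+1)" by (rule V)
    moreover have "Suc M = n - 1 - j" using assms by (simp add: M_def)
    ultimately show ?thesis by simp
  qed
  finally show ?thesis .
qed

lemma marg2:
  assumes "j \<le> n - 2" "n \<ge> 2"
  shows "probJr t1 t2 t3 n 2 j = real (j choose t2) * real ((n-1-j) choose (t1+t3+1)) / real (n choose (t1+t2+t3+2))"
proof -
  define M where "M = n - 2 - j"
  have S: "{x\<in>J_support n. comp3 2 x = j} = (\<lambda>b. (b, j, M - b)) ` {..M}"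
  proof (intro equalityI subsetI)
    fix x assume "x \<in> {x\<in>J_support n. comp3 2 x = j}"
    then obtain a b c where x: "x = (a,b,c)" "a+b+c = n-2" "b = j"
      by (cases x) (auto simp: J_support_def comp3_def)
    then show "x \<in> (\<lambda>b. (b, j, M - b)) ` {..M}"
      by (intro image_eqI[of _ _ a]) (auto simp: M_def)
  next
    fix x assume "x \<in> (\<lambda>b. (b, j, M - b)) ` {..M}"
    then show "x \<in> {x\<in>J_support n. comp3 2 x = j}"
      using assms by (auto simp: J_support_def comp3_def M_def)
  qed
  have inj: "inj_on (\<lambda>b. (b, j, M - b)) {..M}" by (auto simp: inj_on_def)
  have "probJr t1 t2 t3 n 2 j = (\<Sum>b\<le>M. probJ t1 t2 t3 n (b, j, M - b))"
    unfolding probJr_def S by (simp add: sum.reindex[OF inj])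
  also have "\<dots> = (\<Sum>b\<le>M. real (j choose t2) * (real (b choose t1) * real ((M - b) choose t3)) / real (n choose (t1+t2+t3+2)))"
    by (intro sum.cong refl) (use assms in \<open>auto simp: probJ_def M_def\<close>)
  also have "\<dots> = real (j choose t2) * real (\<Sum>b\<le>M. (b choose t1) * ((M - b) choose t3)) / real (n choose (t1+t2+t3+2))"
    by (simp add: sum_divide_distrib[symmetric] sum_distrib_left[symmetric])
  also have "\<dots> = real (j choose t2) * real ((n-1-j) choose (t1+t3+1)) / real (n choose (t1+t2+t3+2))"
  proof -
    have "(\<Sum>b\<le>M. (b choose t1) * ((M - b) choose t3)) = Suc M choose (t1+t3+1)" by (rule V)
    moreover have "Suc M = n - 1 - j" using assms by (simp add: M_def)
    ultimately show ?thesis by simp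
  qed
  finally show ?thesis .
qed

lemma marg3:
  assumes "j \<le> n - 2" "n \<ge> 2"
  shows "probJr t1 t2 t3 n 3 j = real (j choose t3) * real ((n-1-j) choose (t1+t2+1)) / real (n choose (t1+t2+t3+2))"
proof -
  define M where "M = n - 2 - j"
  have S: "{x\<in>J_support n. comp3 3 x = j} = (\<lambda>b. (b, M - b, j)) ` {..M}"
  proof (intro equalityI subsetI)
    fix x assume "x \<in> {x\<in>J_support n. comp3 3 x = j}"
    then obtain a b c where x: "x = (a,b,c)" "a+b+c = n-2" "c = j"
      by (cases x) (auto simp: J_support_def comp3_def)
    then show "x \<in> (\<lambda>b. (b, M - b, j)) ` {..M}"
      by (intro image_eqI[of _ _ a]) (auto simp: M_def)
  next
    fix x assume "x \<in> (\<lambda>b. (b, M - b, j)) ` {..M}"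
    then show "x \<in> {x\<in>J_support n. comp3 3 x = j}"
      using assms by (auto simp: J_support_def comp3_def M_def)
  qed
  have inj: "inj_on (\<lambda>b. (b, M - b, j)) {..M}" by (auto simp: inj_on_def)
  have "probJr t1 t2 t3 n 3 j = (\<Sum>b\<le>M. probJ t1 t2 t3 n (b, M - b, j))"
    unfolding probJr_def S by (simp add: sum.reindex[OF inj])
  also have "\<dots> = (\<Sum>b\<le>M. real (j choose t3) * (real (b choose t1) * real ((M - b) choose t2)) / real (n choose (t1+t2+t3+2)))"
    by (intro sum.cong refl) (use assms in \<open>auto simp: probJ_def M_def\<close>)
  also have "\<dots> = real (j choose t3) * real (\<Sum>b\<le>M. (b choose t1) * ((M - b) choose t2)) / real (n choose (t1+t2+t3+2))"
    by (simp add: sum_divide_distrib[symmetric] sum_distrib_left[symmetric])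
  also have "\<dots> = real (j choose t3) * real ((n-1-j) choose (t1+t2+1)) / real (n choose (t1+t2+t3+2))"
  proof -
    have "(\<Sum>b\<le>M. (b choose t1) * ((M - b) choose t2)) = Suc M choose (t1+t2+1)" by (rule V)
    moreover have "Suc M = n - 1 - j" using assms by (simp add: M_def)
    ultimately show ?thesis by simp
  qed
  finally show ?thesis .
qed



lemma shift_sum:
  fixes F :: "nat \<Rightarrow> real"
  assumes "n \<ge> 2" "F 0 = 0" "F n = 0"
  shows "(\<Sum>j\<le>n-2. F (Suc j)) = (\<Sum>i\<le>n. F i)"
proof -
  have n: "n = Suc (Suc (n-2))" using assms by simp
  have "(\<Sum>i\<le>n. F i) = (\<Sum>i\<le>Suc (Suc (n-2)). F i)" using n by simp
  also have "\<dots> = F 0 + (\<Sum>j\<le>Suc (n-2). F (Suc j))" by (rule sum.atMost_Suc_shift)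
  also have "\<dots> = (\<Sum>j\<le>n-2. F (Suc j)) + F n" using assms(2) n by (simp add: atMost_Suc)
  finally show ?thesis using assms(3) by simp
qed

lemma absorb: "real (Suc j) * real (j choose t) = real (Suc t) * real (Suc j choose Suc t)"
proof -
  have "real (Suc j * (j choose t)) = real ((Suc j choose Suc t) * Suc t)"
    by (simp only: Suc_times_binomial_eq)
  then show ?thesis by (simp only: of_nat_mult mult.commute)
qed

lemma key_g:
  assumes "s \<ge> 1" "n \<ge> 2"
  shows "(\<Sum>j\<le>n-2. real (j choose t) * real ((n-1-j) choose s) * (real (j+1) * harm (j+1)))
     = real (t+1) * real (Suc n choose (t+s+2)) * (harm (Suc n) - harm (t+s+2) + harm (t+1))"
proof -
  define F where "F i = real (i choose Suc t) * real ((n-i) choose s) * harm i" for i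
  have "(\<Sum>j\<le>n-2. real (j choose t) * real ((n-1-j) choose s) * (real (j+1) * harm (j+1)))
      = (\<Sum>j\<le>n-2. real (t+1) * F (Suc j))"
  proof (intro sum.cong refl)
    fix j assume "j \<in> {..n-2}"
    have "real (j choose t) * real ((n-1-j) choose s) * (real (j+1) * harm (j+1))
        = (real (Suc j) * real (j choose t)) * real ((n-1-j) choose s) * harm (j+1)" by simp
    also have "\<dots> = real (t+1) * F (Suc j)" unfolding absorb F_def by simp
    finally show "real (j choose t) * real ((n-1-j) choose s) * (real (j+1) * harm (j+1)) = real (t+1) * F (Suc j)" .
  qed
  also have "\<dots> = real (t+1) * (\<Sum>i\<le>n. F i)"
  proof -
    have "(\<Sum>j\<le>n-2. F (Suc j)) = (\<Sum>i\<le>n. F i)"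
      by (rule shift_sum) (use assms in \<open>auto simp: F_def\<close>)
    then show ?thesis by (simp only: sum_distrib_left[symmetric])
  qed
  also have "(\<Sum>i\<le>n. F i) = real (Suc n choose (Suc t + s + 1)) * (harm (Suc n) - harm (Suc t + s + 1) + harm (Suc t))"
    unfolding F_def by (rule HV)
  finally show ?thesis by simp
qed

lemma key_u:
  assumes "s \<ge> 1" "n \<ge> 2"
  shows "(\<Sum>j\<le>n-2. real (j choose t) * real ((n-1-j) choose s) * real (j+1))
     = real (t+1) * real (Suc n choose (t+s+2))"
proof -
  define F where "F i = real (i choose Suc t) * real ((n-i) choose s)" for i
  have "(\<Sum>j\<le>n-2. real (j choose t) * real ((n-1-j) choose s) * real (j+1))
      = (\<Sum>j\<le>n-2. real (t+1) * F (Suc j))"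
  proof (intro sum.cong refl)
    fix j assume "j \<in> {..n-2}"
    have "real (j choose t) * real ((n-1-j) choose s) * real (j+1)
        = (real (Suc j) * real (j choose t)) * real ((n-1-j) choose s)" by simp
    also have "\<dots> = real (t+1) * F (Suc j)" unfolding absorb F_def by simp
    finally show "real (j choose t) * real ((n-1-j) choose s) * real (j+1) = real (t+1) * F (Suc j)" .
  qed
  also have "\<dots> = real (t+1) * (\<Sum>i\<le>n. F i)"
  proof -
    have "(\<Sum>j\<le>n-2. F (Suc j)) = (\<Sum>i\<le>n. F i)"
      by (rule shift_sum) (use assms in \<open>auto simp: F_def\<close>)
    then show ?thesis by (simp only: sum_distrib_left[symmetric])
  qed
  also have "(\<Sum>i\<le>n. F i) = real (\<Sum>i\<le>n. (i choose Suc t) * ((n-i) choose s))"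
    unfolding F_def by simp
  also have "\<dots> = real (Suc n choose (Suc t + s + 1))" by (simp only: V)
  finally show ?thesis by simp
qed



lemma gen3: "(f::real) * (a/c + b/c + d/c) = (a*f + b*f + d*f)/c"
  by (simp add: add_divide_distrib[symmetric] algebra_simps)

lemma alg3: "(K1::real) = x1+x2+x3 \<Longrightarrow> K1 > 0 \<Longrightarrow>
  (x1*(h - hK + h1) + x2*(h - hK + h2) + x3*(h - hK + h3)) * (N/K1)
   = N*h - N*(x1/K1*(hK-h1) + x2/K1*(hK-h2) + x3/K1*(hK-h3))"
proof -
  assume a: "K1 = x1+x2+x3" "K1 > 0"
  have "(x1*(h - hK + h1) + x2*(h - hK + h2) + x3*(h - hK + h3)) * (N/K1)
     = (x1+x2+x3)*h*(N/K1) - N*(x1/K1*(hK-h1) + x2/K1*(hK-h2) + x3/K1*(hK-h3))"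
    by (simp add: divide_inverse algebra_simps)
  also have "(x1+x2+x3)*h*(N/K1) = N*h" using a by simp
  finally show ?thesis .
qed

definition W :: "nat \<Rightarrow> nat \<Rightarrow> nat \<Rightarrow> nat \<Rightarrow> (nat \<Rightarrow> real) \<Rightarrow> real" where
  "W t1 t2 t3 n f = (\<Sum>j = 0..n-2. f j * (\<Sum>r\<in>{1,2,3}. probJr t1 t2 t3 n r j))"

lemma W_split:
  assumes "n \<ge> 2"
  shows "W t1 t2 t3 n f =
    ((\<Sum>j\<le>n-2. real (j choose t1) * real ((n-1-j) choose (t2+t3+1)) * f j)
   + (\<Sum>j\<le>n-2. real (j choose t2) * real ((n-1-j) choose (t1+t3+1)) * f j)
   + (\<Sum>j\<le>n-2. real (j choose t3) * real ((n-1-j) choose (t1+t2+1)) * f j))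
   / real (n choose (t1+t2+t3+2))"
proof -
  have "W t1 t2 t3 n f = (\<Sum>j\<le>n-2.
     (real (j choose t1) * real ((n-1-j) choose (t2+t3+1)) * f j
    + real (j choose t2) * real ((n-1-j) choose (t1+t3+1)) * f j
    + real (j choose t3) * real ((n-1-j) choose (t1+t2+1)) * f j) / real (n choose (t1+t2+t3+2)))"
    unfolding W_def atLeast0AtMost
  proof (intro sum.cong refl)
    fix j assume j: "j \<in> {..n-2}"
    then have j': "j \<le> n - 2" by simp
    have eq: "(\<Sum>r\<in>{1,2,3}. probJr t1 t2 t3 n r j) = probJr t1 t2 t3 n 1 j + probJr t1 t2 t3 n 2 j + probJr t1 t2 t3 n 3 j"
      by simp
    show "f j * (\<Sum>r\<in>{1,2,3}. probJr t1 t2 t3 n r j) = (real (j choose t1) * real ((n-1-j) choose (t2+t3+1)) * f j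
    + real (j choose t2) * real ((n-1-j) choose (t1+t3+1)) * f j
    + real (j choose t3) * real ((n-1-j) choose (t1+t2+1)) * f j) / real (n choose (t1+t2+t3+2))"
      unfolding eq marg1[OF j' assms] marg2[OF j' assms] marg3[OF j' assms]
      by (rule gen3)
  qed
  then show ?thesis by (simp add: sum_divide_distrib[symmetric] sum.distrib)
qed

lemma binom_ratio:
  assumes "n \<ge> K"
  shows "real (Suc n choose Suc K) / real (n choose K) = (real n + 1) / (real K + 1)"
proof -
  have "real (Suc n * (n choose K)) = real ((Suc n choose Suc K) * Suc K)"
    by (simp only: Suc_times_binomial_eq)
  then have e: "(real n + 1) * real (n choose K) = real (Suc n choose Suc K) * (real K + 1)"
    by (simp only: of_nat_mult of_nat_Suc) (simp add: algebra_simps del: binomial_Suc_Suc)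
  have "real (n choose K) > 0" using assms by simp
  then show ?thesis using e by (simp add: field_simps del: binomial_Suc_Suc)
qed

lemma W_u:
  assumes "n \<ge> t1+t2+t3+2"
  shows "W t1 t2 t3 n (\<lambda>j. real (j+1)) = real n + 1"
proof -
  define K where "K = t1+t2+t3+2"
  have n2: "n \<ge> 2" using assms by simp
  have e1: "t1 + (t2+t3+1) + 2 = Suc K" "t2 + (t1+t3+1) + 2 = Suc K" "t3 + (t1+t2+1) + 2 = Suc K"
    by (simp_all add: K_def)
  have "W t1 t2 t3 n (\<lambda>j. real (j+1)) = (real (t1+1) + real (t2+1) + real (t3+1)) *
     (real (Suc n choose Suc K) / real (n choose K))"
  proof -
    have a1: "(\<Sum>j\<le>n-2. real (j choose t1) * real ((n-1-j) choose (t2+t3+1)) * real (j+1)) = real (t1+1) * real (Suc n choose Suc K)"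
      using key_u[OF _ n2, of "t2+t3+1" t1] unfolding e1(1) by (simp del: binomial_Suc_Suc)
    have a2: "(\<Sum>j\<le>n-2. real (j choose t2) * real ((n-1-j) choose (t1+t3+1)) * real (j+1)) = real (t2+1) * real (Suc n choose Suc K)"
      using key_u[OF _ n2, of "t1+t3+1" t2] unfolding e1(2) by (simp del: binomial_Suc_Suc)
    have a3: "(\<Sum>j\<le>n-2. real (j choose t3) * real ((n-1-j) choose (t1+t2+1)) * real (j+1)) = real (t3+1) * real (Suc n choose Suc K)"
      using key_u[OF _ n2, of "t1+t2+1" t3] unfolding e1(3) by (simp del: binomial_Suc_Suc)
    show ?thesis unfolding W_split[OF n2] a1 a2 a3 K_def[symmetric] by (cases "real (n choose K) = 0") (simp_all add: field_simps del: binomial_Suc_Suc)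
  qed
  also have "\<dots> = real n + 1"
    unfolding binom_ratio[OF assms[folded K_def]] by (simp add: K_def field_simps del: binomial_Suc_Suc)
  finally show ?thesis .
qed

lemma entropyH_eq: "entropyH t1 t2 t3 =
   (\<Sum>t\<in>{0,1,2::nat}. 0) + real (t1+1) / real (t1+t2+t3+3) * (harm (t1+t2+t3+3) - harm (t1+1))
 + real (t2+1) / real (t1+t2+t3+3) * (harm (t1+t2+t3+3) - harm (t2+1))
 + real (t3+1) / real (t1+t2+t3+3) * (harm (t1+t2+t3+3) - harm (t3+1))"
  by (simp add: entropyH_def Let_def eval_nat_numeral add_ac)

lemma W_g:
  assumes "n \<ge> t1+t2+t3+2"
  shows "W t1 t2 t3 n (\<lambda>j. real (j+1) * harm (j+1)) = (real n + 1) * harm (n+1) - (real n + 1) * entropyH t1 t2 t3"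
proof -
  define K where "K = t1+t2+t3+2"
  have n2: "n \<ge> 2" using assms by simp
  have e1: "t1 + (t2+t3+1) + 2 = Suc K" "t2 + (t1+t3+1) + 2 = Suc K" "t3 + (t1+t2+1) + 2 = Suc K"
    by (simp_all add: K_def)
  have "W t1 t2 t3 n (\<lambda>j. real (j+1) * harm (j+1)) =
     (real (t1+1) * (harm (Suc n) - harm (Suc K) + harm (t1+1))
    + real (t2+1) * (harm (Suc n) - harm (Suc K) + harm (t2+1))
    + real (t3+1) * (harm (Suc n) - harm (Suc K) + harm (t3+1))) *
     (real (Suc n choose Suc K) / real (n choose K))"
  proof -
    have a1: "(\<Sum>j\<le>n-2. real (j choose t1) * real ((n-1-j) choose (t2+t3+1)) * (real (j+1) * harm (j+1))) = real (t1+1) * real (Suc n choose Suc K) * (harm (Suc n) - harm (Suc K) + harm (t1+1))"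
      using key_g[OF _ n2, of "t2+t3+1" t1] unfolding e1(1) by (simp del: binomial_Suc_Suc)
    have a2: "(\<Sum>j\<le>n-2. real (j choose t2) * real ((n-1-j) choose (t1+t3+1)) * (real (j+1) * harm (j+1))) = real (t2+1) * real (Suc n choose Suc K) * (harm (Suc n) - harm (Suc K) + harm (t2+1))"
      using key_g[OF _ n2, of "t1+t3+1" t2] unfolding e1(2) by (simp del: binomial_Suc_Suc)
    have a3: "(\<Sum>j\<le>n-2. real (j choose t3) * real ((n-1-j) choose (t1+t2+1)) * (real (j+1) * harm (j+1))) = real (t3+1) * real (Suc n choose Suc K) * (harm (Suc n) - harm (Suc K) + harm (t3+1))"
      using key_g[OF _ n2, of "t1+t2+1" t3] unfolding e1(3) by (simp del: binomial_Suc_Suc)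
    show ?thesis unfolding W_split[OF n2] a1 a2 a3 K_def[symmetric] by (cases "real (n choose K) = 0") (simp_all add: field_simps del: binomial_Suc_Suc)
  qed
  also have "\<dots> = (real n + 1) * harm (n+1) - (real n + 1) * entropyH t1 t2 t3"
  proof -
    have hh: "entropyH t1 t2 t3 = real (t1+1) / (real K + 1) * (harm (Suc K) - harm (t1+1))
     + real (t2+1) / (real K + 1) * (harm (Suc K) - harm (t2+1))
     + real (t3+1) / (real K + 1) * (harm (Suc K) - harm (t3+1))"
    proof -
      have kk: "Suc K = t1+t2+t3+3" by (simp add: K_def)
      show ?thesis unfolding entropyH_eq kk by (simp add: K_def add_ac)
    qed
    show ?thesis unfolding binom_ratio[OF assms[folded K_def]] hh unfolding Suc_eq_plus1[of n]
      by (rule alg3) (simp_all add: K_def)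
  qed
  finally show ?thesis .
qed



lemma smallo_cmult: "(f :: nat \<Rightarrow> real) \<in> o(h) \<Longrightarrow> (\<lambda>x. c * f x) \<in> o(h)"
  by (cases "c = 0") (simp_all add: landau_o.small.cmult_in_iff)

lemma probJr_nonneg: "probJr t1 t2 t3 n r j \<ge> 0"
  unfolding probJr_def probJ_def by (auto intro!: sum_nonneg split: prod.splits)

lemma W_mono: "(\<And>j. j \<le> n - 2 \<Longrightarrow> X j \<le> Y j) \<Longrightarrow> W t1 t2 t3 n X \<le> W t1 t2 t3 n Y"
  unfolding W_def
  by (intro sum_mono mult_right_mono sum_nonneg probJr_nonneg) auto

lemma W_lin: "W t1 t2 t3 n (\<lambda>j. c * X j + d * Y j) = c * W t1 t2 t3 n X + d * W t1 t2 t3 n Y"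
  unfolding W_def by (simp add: algebra_simps sum.distrib sum_distrib_left)

lemma compare:
  assumes "\<And>n. n \<le> N \<Longrightarrow> X n \<le> Y n"
    and "\<And>n. n > N \<Longrightarrow> X n - W t1 t2 t3 n X \<le> Y n - W t1 t2 t3 n Y"
  shows "X n \<le> Y n"
proof (induction n rule: less_induct)
  case (less n)
  show ?case
  proof (cases "n \<le> N")
    case True then show ?thesis using assms(1) by simp
  next
    case False
    then have "n > N" by simp
    have "W t1 t2 t3 n X \<le> W t1 t2 t3 n Y"
      by (rule W_mono) (use less \<open>n > N\<close> in auto)
    then show ?thesis using assms(2)[OF \<open>n > N\<close>] by simp
  qed
qed

lemma harm_lt_Suc: "harm m < (harm (Suc m) :: real)"
  by (simp add: harm_Suc)

lemma entropyH_pos: "entropyH t1 t2 t3 > 0"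
proof -
  have h1: "harm (t1+1) < (harm (t1+t2+t3+3) :: real)"
    using harm_lt_Suc[of "t1+1"] harm_mono[of "Suc (t1+1)" "t1+t2+t3+3", where 'a=real] by (simp del: harm_Suc)
  have h2: "harm (t2+1) \<le> (harm (t1+t2+t3+3) :: real)" by (intro harm_mono) simp
  have h3: "harm (t3+1) \<le> (harm (t1+t2+t3+3) :: real)" by (intro harm_mono) simp
  have "real (t1+1) / real (t1+t2+t3+3) * (harm (t1+t2+t3+3) - harm (t1+1)) > 0"
    using h1 by (intro mult_pos_pos) auto
  moreover have "real (t2+1) / real (t1+t2+t3+3) * (harm (t1+t2+t3+3) - harm (t2+1)) \<ge> 0"
    using h2 by (intro mult_nonneg_nonneg) auto
  moreover have "real (t3+1) / real (t1+t2+t3+3) * (harm (t1+t2+t3+3) - harm (t3+1)) \<ge> 0"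
    using h3 by (intro mult_nonneg_nonneg) auto
  ultimately show ?thesis unfolding entropyH_eq by simp
qed

lemma upper:
  fixes E T :: "nat \<Rightarrow> real"
  assumes hw: "w \<ge> t1+t2+t3+2"
    and rec: "\<And>n. n > w \<Longrightarrow> E n = T n + W t1 t2 t3 n E"
    and hT: "\<And>e. e > 0 \<Longrightarrow> eventually (\<lambda>n. T n \<le> a * real n + e * real n) sequentially"
    and e: "e > 0"
  shows "\<exists>C. \<forall>n. E n \<le> (a+e)/entropyH t1 t2 t3 * (real (n+1) * harm (n+1)) + C * real (n+1)"
proof -
  define H where "H = entropyH t1 t2 t3"
  have H: "H > 0" unfolding H_def by (rule entropyH_pos)
  define c where "c = (a+e)/H"
  define g where "g = (\<lambda>j::nat. real (j+1) * harm (j+1) :: real)"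
  define u where "u = (\<lambda>j::nat. real (j+1))"
  have ev: "eventually (\<lambda>n. T n \<le> (a+e) * real (n+1)) sequentially"
  proof -
    have "eventually (\<lambda>n. T n \<le> a * real n + (e/2) * real n) sequentially" using e by (intro hT) simp
    moreover have "eventually (\<lambda>n. real n \<ge> 2*\<bar>a\<bar>/e) sequentially"
      by (rule eventually_ge_at_top[of "nat \<lceil>2*\<bar>a\<bar>/e\<rceil>", THEN eventually_mono]) linarith
    ultimately show ?thesis
    proof eventually_elim
      case (elim n)
      have "e/2 * real n \<ge> \<bar>a\<bar>" using elim(2) e by (simp add: field_simps)
      then show ?case using elim(1) e by (simp add: algebra_simps)
    qed
  qed
  then obtain N1 where N1: "\<And>n. n \<ge> N1 \<Longrightarrow> T n \<le> (a+e) * real (n+1)"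
    unfolding eventually_sequentially by blast
  define N where "N = max N1 w"
  define C where "C = (\<Sum>m\<le>N. \<bar>E m - c * g m\<bar>)"
  have C0: "C \<ge> 0" unfolding C_def by (intro sum_nonneg) auto
  have "E n \<le> c * g n + C * u n" for n
  proof (rule compare[where N = N])
    fix n assume "n \<le> N"
    then have "E n - c * g n \<le> C" unfolding C_def
      using member_le_sum[of n "{..N}" "\<lambda>m. \<bar>E m - c * g m\<bar>"] by auto
    moreover have "C * 1 \<le> C * u n" using C0 by (intro mult_left_mono) (auto simp: u_def)
    ultimately show "E n \<le> c * g n + C * u n" by simp
  next
    fix n assume "n > N"
    then have nw: "n > w" and nN1: "n \<ge> N1" and nK: "n \<ge> t1+t2+t3+2" using hw by (auto simp: N_def)
    have "W t1 t2 t3 n (\<lambda>j. c * g j + C * u j) = c * W t1 t2 t3 n g + C * W t1 t2 t3 n u"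
      by (rule W_lin)
    also have "\<dots> = c * (g n - H * u n) + C * u n"
    proof -
      have Wg: "W t1 t2 t3 n g = g n - H * u n"
        unfolding g_def u_def H_def W_g[OF nK] by (simp add: algebra_simps)
      have Wu: "W t1 t2 t3 n u = u n"
        unfolding u_def W_u[OF nK] by simp
      show ?thesis unfolding Wg Wu ..
    qed
    finally have "c * g n + C * u n - W t1 t2 t3 n (\<lambda>j. c * g j + C * u j) = c * H * u n" by (simp add: algebra_simps)
    also have "\<dots> = (a+e) * real (n+1)" using H by (simp add: c_def u_def)
    finally show "E n - W t1 t2 t3 n E \<le> c * g n + C * u n - W t1 t2 t3 n (\<lambda>j. c * g j + C * u j)"
      using rec[OF nw] N1[OF nN1] by simp
  qed
  then show ?thesis unfolding c_def g_def u_def H_def by blast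
qed

lemma W_neg: "W t1 t2 t3 n (\<lambda>j. - X j) = - W t1 t2 t3 n X"
  unfolding W_def by (simp add: sum_negf)

lemma g_asymp: "(\<lambda>n. real (n+1) * harm (n+1) - real n * ln (real n)) \<in> o(\<lambda>n. real n * ln (real n))"
proof (rule landau_o.smallI)
  fix c :: real assume c: "c > 0"
  define U where "U = (\<lambda>n::nat. (real n + 1) * (ln (real n + 1) + 1) - real n * ln (real n))"
  have "U \<in> o(\<lambda>n. real n * ln (real n))" unfolding U_def by real_asymp
  from landau_o.smallD[OF this c] have ev: "eventually (\<lambda>n. norm (U n) \<le> c * norm (real n * ln (real n))) sequentially" .
  show "eventually (\<lambda>n. norm (real (n+1) * harm (n+1) - real n * ln (real n)) \<le> c * norm (real n * ln (real n))) sequentially"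
    using ev eventually_ge_at_top[of "1::nat"]
  proof eventually_elim
    case (elim n)
    have n1: "real n \<ge> 1" using elim(2) by simp
    have lnn: "ln (real n) \<ge> 0" using n1 by simp
    have hl: "harm (n+1) \<ge> ln (real n)"
    proof -
      have "ln (real n) \<le> ln (real (n+1) + 1)" using n1 by simp
      also have "\<dots> \<le> harm (n+1)" by (rule harm_ge_ln)
      finally show ?thesis .
    qed
    have hu: "harm (n+1) \<le> ln (real n + 1) + 1"
      using euler_mascheroni_sequence_decreasing[of 1 "n+1"] by (simp add: harm_Suc harm_def[of 0] add_ac)
    have lo: "real (n+1) * harm (n+1) - real n * ln (real n) \<ge> 0"
    proof -
      have "real n * ln (real n) \<le> real (n+1) * ln (real n)" using lnn by (intro mult_right_mono) auto
      also have "\<dots> \<le> real (n+1) * harm (n+1)" using hl by (intro mult_left_mono) auto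
      finally show ?thesis by simp
    qed
    have up: "real (n+1) * harm (n+1) - real n * ln (real n) \<le> U n"
    proof -
      have "real (n+1) * harm (n+1) \<le> (real n + 1) * (ln (real n + 1) + 1)"
        using mult_left_mono[OF hu, of "real n + 1"] by (simp add: add_ac)
      then show ?thesis unfolding U_def by simp
    qed
    have "norm (real (n+1) * harm (n+1) - real n * ln (real n)) \<le> norm (U n)"
      using lo up by simp
    then show ?case using elim(1) by linarith
  qed
qed

lemma two_sided:
  fixes E T :: "nat \<Rightarrow> real"
  assumes hw: "w \<ge> t1+t2+t3+2"
    and rec: "\<And>n. n > w \<Longrightarrow> E n = T n + W t1 t2 t3 n E"
    and hT: "\<And>e. e > 0 \<Longrightarrow> eventually (\<lambda>n. \<bar>T n - a * real n\<bar> \<le> e * real n) sequentially"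
    and e: "e > 0"
  shows "\<exists>C. \<forall>n. \<bar>E n - a/entropyH t1 t2 t3 * (real (n+1) * harm (n+1))\<bar>
            \<le> e/entropyH t1 t2 t3 * (real (n+1) * harm (n+1)) + C * real (n+1)"
proof -
  define H where "H = entropyH t1 t2 t3"
  have H: "H > 0" unfolding H_def by (rule entropyH_pos)
  have hT1: "eventually (\<lambda>n. T n \<le> a * real n + e' * real n) sequentially" if "e' > 0" for e'
    using hT[OF that] by eventually_elim auto
  have hT2: "eventually (\<lambda>n. - T n \<le> (-a) * real n + e' * real n) sequentially" if "e' > 0" for e'
    using hT[OF that] by eventually_elim auto
  obtain C1 where C1: "\<And>n. E n \<le> (a+e)/H * (real (n+1) * harm (n+1)) + C1 * real (n+1)"
    using upper[OF hw rec hT1 e] unfolding H_def by blast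
  have rec2: "- E n = - T n + W t1 t2 t3 n (\<lambda>j. - E j)" if "n > w" for n
    using rec[OF that] by (simp add: W_neg)
  obtain C2 where C2: "\<And>n. - E n \<le> (-a+e)/H * (real (n+1) * harm (n+1)) + C2 * real (n+1)"
    using upper[OF hw rec2 hT2 e] unfolding H_def by blast
  define C where "C = max C1 C2"
  have "\<bar>E n - a/H * (real (n+1) * harm (n+1))\<bar> \<le> e/H * (real (n+1) * harm (n+1)) + C * real (n+1)" for n
  proof -
    have c1: "C1 * real (n+1) \<le> C * real (n+1)" by (intro mult_right_mono) (auto simp: C_def)
    have c2: "C2 * real (n+1) \<le> C * real (n+1)" by (intro mult_right_mono) (auto simp: C_def)
    have s1: "(a+e)/H = a/H + e/H" "(-a+e)/H = -(a/H) + e/H" using H by (simp_all add: field_simps)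
    show ?thesis using C1[of n] C2[of n] c1 c2 unfolding s1 by (simp add: algebra_simps abs_le_iff)
  qed
  then show ?thesis unfolding H_def by blast
qed

theorem theorem6p2:
  fixes t1 t2 t3 w :: nat and E T :: "nat \<Rightarrow> real" and a \<epsilon> :: real
  assumes hw: "w \<ge> t1 + t2 + t3 + 2"
    and rec: "\<And>n. n > w \<Longrightarrow>
      E n = T n + (\<Sum>j = 0..n-2. E j * (\<Sum>r\<in>{1,2,3}. probJr t1 t2 t3 n r j))"
    and heps: "\<epsilon> > 0"
    and hT: "(\<lambda>n. T n - a * real n) \<in> O(\<lambda>n. real n powr (1 - \<epsilon>))"
  shows "(\<lambda>n. E n - a / entropyH t1 t2 t3 * real n * ln (real n))
           \<in> o(\<lambda>n. real n * ln (real n))"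
proof -
  define H where "H = entropyH t1 t2 t3"
  have H: "H > 0" unfolding H_def by (rule entropyH_pos)
  define g where "g = (\<lambda>n::nat. real (n+1) * harm (n+1) :: real)"
  define u where "u = (\<lambda>n::nat. real (n+1))"
  have rec': "\<And>n. n > w \<Longrightarrow> E n = T n + W t1 t2 t3 n E"
    using rec unfolding W_def by blast
  have "(\<lambda>n. real n powr (1 - \<epsilon>)) \<in> o(\<lambda>n. real n)" using heps by real_asymp
  with hT have hTo: "(\<lambda>n. T n - a * real n) \<in> o(\<lambda>n. real n)" by (rule landau_o.big_small_trans)
  have hT': "eventually (\<lambda>n. \<bar>T n - a * real n\<bar> \<le> e * real n) sequentially" if "e > 0" for e
    using landau_o.smallD[OF hTo that] by simp
  have bnd: "\<exists>C. \<forall>n. \<bar>E n - a/H * g n\<bar> \<le> e/H * g n + C * u n" if "e > 0" for e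
    using two_sided[OF hw rec' hT' that] unfolding H_def g_def u_def .
  have gas: "(\<lambda>n. g n - real n * ln (real n)) \<in> o(\<lambda>n. real n * ln (real n))"
    unfolding g_def using g_asymp .
  have uas: "u \<in> o(\<lambda>n. real n * ln (real n))" unfolding u_def by real_asymp
  have D: "(\<lambda>n. E n - a/H * g n) \<in> o(\<lambda>n. real n * ln (real n))"
  proof (rule landau_o.smallI)
    fix c :: real assume c: "c > 0"
    define e where "e = c * H / 4"
    have e: "e > 0" using c H by (simp add: e_def)
    obtain C where C: "\<And>n. \<bar>E n - a/H * g n\<bar> \<le> e/H * g n + C * u n" using bnd[OF e] by blast
    define C' where "C' = max C 0 + 1"
    have C': "C' > 0" "C \<le> C'" by (auto simp: C'_def)
    have ev1: "eventually (\<lambda>n. norm (g n - real n * ln (real n)) \<le> 1 * norm (real n * ln (real n))) sequentially"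
      by (rule landau_o.smallD[OF gas]) simp
    have ev2: "eventually (\<lambda>n. norm (u n) \<le> (c / (2*C')) * norm (real n * ln (real n))) sequentially"
      by (rule landau_o.smallD[OF uas]) (use c C' in simp)
    show "eventually (\<lambda>n. norm (E n - a/H * g n) \<le> c * norm (real n * ln (real n))) sequentially"
      using ev1 ev2 eventually_ge_at_top[of "1::nat"]
    proof eventually_elim
      case (elim n)
      have n1: "real n \<ge> 1" using elim(3) by simp
      have L0: "real n * ln (real n) \<ge> 0" using n1 by simp
      have g0: "g n \<ge> 0" unfolding g_def by (simp add: harm_nonneg)
      have u0: "u n \<ge> 0" unfolding u_def by simp
      have gl: "g n \<le> 2 * (real n * ln (real n))" using elim(1) L0 by simp
      have ul: "u n \<le> (c / (2*C')) * (real n * ln (real n))" using elim(2) L0 u0 by simp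
      have "e/H * g n \<le> e/H * (2 * (real n * ln (real n)))"
        using gl e H by (intro mult_left_mono) auto
      also have "\<dots> = c/2 * (real n * ln (real n))" using H by (simp add: e_def field_simps)
      finally have t1: "e/H * g n \<le> c/2 * (real n * ln (real n))" .
      have "C * u n \<le> C' * u n" using C' u0 by (intro mult_right_mono) auto
      also have "\<dots> \<le> C' * ((c / (2*C')) * (real n * ln (real n)))" using ul C' by (intro mult_left_mono) auto
      also have "\<dots> = c/2 * (real n * ln (real n))" using C' by (simp add: field_simps)
      finally have t2: "C * u n \<le> c/2 * (real n * ln (real n))" .
      have "\<bar>E n - a/H * g n\<bar> \<le> c * (real n * ln (real n))" using C[of n] t1 t2 by linarith
      then show ?case using L0 by simp
    qed
  qed
  have eq: "(\<lambda>n. E n - a / entropyH t1 t2 t3 * real n * ln (real n))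
      = (\<lambda>n. (E n - a/H * g n) + a/H * (g n - real n * ln (real n)))"
    by (rule ext) (simp add: H_def algebra_simps)
  show ?thesis unfolding eq
    by (rule sum_in_smallo(1)[OF D smallo_cmult[OF gas]])
qed


end
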